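(* Let $q=2^h$ with $h\equiv 1\pmod 2$ and let $$U=\left\{\left(x,\,y,\,x^q+y^{q^2},\,x^{q^2}+y^q+y^{q^2}\right): x,y\in\mathbb F_{q^4}\right\}\subseteq\mathbb F_{q^4}^4.$$ Then $U$ is $(2,3)_q$-evasive, i.e. $\dim_{\mathbb F_q}(U\cap H)\le 3$ for every $2$-dimensional $\mathbb F_{q^4}$-subspace $H$ of $\mathbb F_{q^4}^4$.
   Context: $U$ is an $\mathbb F_q$-subspace of $\mathbb F_{q^4}^4$ of $\mathbb F_q$-dimension $8$. *)

theory Defs
  imports "HOL-Analysis.Finite_Cartesian_Product"
begin

definition vec4 :: "'a \<Rightarrow> 'a \<Rightarrow> 'a \<Rightarrow> 'a \<Rightarrow> 'a ^ 4" where
  "vec4 a b c d = (\<chi> i. if i = 0 then a else if i = 1 then b else if i = 2 then c else d)"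

definition lin_indep_over :: "'a::field set \<Rightarrow> nat \<Rightarrow> (nat \<Rightarrow> 'a ^ 'n) \<Rightarrow> bool" where
  "lin_indep_over K n v \<longleftrightarrow>
     (\<forall>c. (\<forall>i<n. c i \<in> K) \<longrightarrow> (\<Sum>i<n. c i *s v i) = 0 \<longrightarrow> (\<forall>i<n. c i = 0))"

definition subspace_over :: "'a::field set \<Rightarrow> ('a ^ 'n) set \<Rightarrow> bool" where
  "subspace_over K S \<longleftrightarrow> 0 \<in> S \<and> (\<forall>x\<in>S. \<forall>y\<in>S. x + y \<in> S) \<and> (\<forall>c\<in>K. \<forall>x\<in>S. c *s x \<in> S)"

definition dim_over :: "'a::field set \<Rightarrow> ('a ^ 'n) set \<Rightarrow> nat" where
  "dim_over K S = (GREATEST n. \<exists>v. (\<forall>i<n. v i \<in> S) \<and> lin_indep_over K n v)"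

text \<open>The subfield F_q of a field of order q^4: the fixed points of x \<mapsto> x^q.\<close>
definition subfield_Fq :: "nat \<Rightarrow> 'a::field set" where
  "subfield_Fq q = {x. x ^ q = x}"

end

theory Submission imports Defs "HOL-Number_Theory.Residues" "HOL-Computational_Algebra.Primes" begin

lemma ex4: fixes x :: 4 shows "x = 0 \<or> x = 1 \<or> x = 2 \<or> x = 3"
proof (induct x)
  case (of_int z)
  then have "z = 0 \<or> z = 1 \<or> z = 2 \<or> z = 3" by fastforce
  then show ?case by auto
qed

lemma UNIV4: "(UNIV :: 4 set) = {0,1,2,3}" using ex4 by auto

lemma sum4: "(\<Sum>i\<in>(UNIV::4 set). f i) = f 0 + f 1 + f 2 + f 3"
  unfolding UNIV4 by (simp add: add.assoc)

lemma vec4_nth [simp]: "vec4 a b c d $ 0 = a" "vec4 a b c d $ 1 = b" "vec4 a b c d $ 2 = c" "vec4 a b c d $ 3 = d"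
  by (simp_all add: vec4_def)

lemma vec4_eq_iff: "vec4 a b c d = vec4 a' b' c' d' \<longleftrightarrow> a = a' \<and> b = b' \<and> c = c' \<and> d = d'"
  by (metis vec4_nth)

lemma forall4: "(\<forall>i::4. P i) \<longleftrightarrow> P 0 \<and> P 1 \<and> P 2 \<and> P 3"
proof
  assume "P 0 \<and> P 1 \<and> P 2 \<and> P 3"
  then show "\<forall>i::4. P i" by (metis ex4)
qed simp

lemma vec_eq4: "(v::'a^4) = w \<longleftrightarrow> v$0 = w$0 \<and> v$1 = w$1 \<and> v$2 = w$2 \<and> v$3 = w$3"
  unfolding vec_eq_iff forall4 ..

lemma li_apply:
  assumes "lin_indep_over K n w" "\<forall>i<n. c i \<in> K" "(\<Sum>i<n. c i *s w i) = 0" "i < n"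
  shows "c i = 0"
  using assms unfolding lin_indep_over_def by blast

lemma comb_inj:
  fixes w :: "nat \<Rightarrow> 'a::field ^ 'n"
  assumes li: "lin_indep_over K n w" and sub: "\<And>a b. a \<in> K \<Longrightarrow> b \<in> K \<Longrightarrow> a - b \<in> K"
  shows "inj_on (\<lambda>c. \<Sum>i<n. c i *s w i) (PiE {..<n} (\<lambda>_. K))"
proof (rule inj_onI)
  fix c c' assume c: "c \<in> PiE {..<n} (\<lambda>_. K)" and c': "c' \<in> PiE {..<n} (\<lambda>_. K)"
    and eq: "(\<Sum>i<n. c i *s w i) = (\<Sum>i<n. c' i *s w i)"
  have B: "(\<Sum>i<n. (c i - c' i) *s w i) = 0" using eq by (simp add: vector_sub_rdistrib sum_subtractf)
  have A: "\<forall>i<n. c i - c' i \<in> K" using c c' sub by (auto simp: PiE_iff)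
  have "\<forall>i<n. c i - c' i = 0" using li_apply[OF li A B] by blast
  show "c = c'"
  proof
    fix i show "c i = c' i"
    proof (cases "i < n")
      case True then show ?thesis using \<open>\<forall>i<n. c i - c' i = 0\<close> by simp
    next
      case False then show ?thesis using c c' by (simp add: PiE_def extensional_def)
    qed
  qed
qed

lemma card_combos: "finite K \<Longrightarrow> card (PiE {..<n} (\<lambda>_. K)) = card K ^ n"
  by (simp add: card_PiE)

lemma indep_le4:
  fixes w :: "nat \<Rightarrow> 'a::{field,finite}^4"
  assumes "lin_indep_over UNIV n w" shows "n \<le> 4"
proof -
  have inj: "inj_on (\<lambda>c. \<Sum>i<n. c i *s w i) (PiE {..<n} (\<lambda>_. UNIV))"
    by (rule comb_inj[OF assms]) auto
  have "CARD('a) ^ n = card ((\<lambda>c. \<Sum>i<n. c i *s w i) ` (PiE {..<n} (\<lambda>_. UNIV)))"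
    using card_image[OF inj] card_combos[of "UNIV::'a set" n] by simp
  also have "\<dots> \<le> CARD('a^4)" by (rule card_mono) auto
  also have "\<dots> = CARD('a) ^ 4" by simp
  finally have le: "CARD('a) ^ n \<le> CARD('a) ^ 4" .
  have "card {0::'a, 1} \<le> CARD('a)" by (rule card_mono) auto
  then have "2 \<le> CARD('a)" by simp
  then show ?thesis using le by (metis One_nat_def Suc_1 Suc_le_eq power_le_imp_le_exp)
qed

lemma span4:
  fixes w :: "nat \<Rightarrow> 'a::{field,finite}^4"
  assumes "lin_indep_over UNIV 4 w" shows "\<exists>c. e = (\<Sum>i<4. c i *s w i)"
proof -
  let ?f = "\<lambda>c. \<Sum>i<4. c i *s w i" and ?P = "PiE {..<4::nat} (\<lambda>_. UNIV::'a set)"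
  have inj: "inj_on ?f ?P" by (rule comb_inj[OF assms]) auto
  have "card (?f ` ?P) = CARD('a) ^ 4"
    using card_image[OF inj] card_combos[of "UNIV::'a set" 4] by simp
  then have "card (?f ` ?P) = card (UNIV :: ('a^4) set)" by simp
  then have "?f ` ?P = UNIV" by (intro card_subset_eq) auto
  then have "e \<in> ?f ` ?P" by simp
  then show ?thesis by blast
qed

lemma orth4:
  fixes w :: "nat \<Rightarrow> 'a::{field,finite}^4"
  assumes li: "lin_indep_over UNIV 4 w" and o: "\<forall>j<4. (\<Sum>i\<in>UNIV. r$i * w j $ i) = 0"
  shows "r = 0"
proof -
  have "r $ k = 0" for k
  proof -
    define e :: "'a^4" where "e = (\<chi> i. if i = k then 1 else 0)"
    obtain c where c: "e = (\<Sum>j<4. c j *s w j)" using span4[OF li] by blast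
    have "(\<Sum>i\<in>UNIV. r$i * e$i) = (\<Sum>i\<in>UNIV. if i = k then r$i else 0)"
      by (rule sum.cong) (auto simp: e_def)
    then have "r $ k = (\<Sum>i\<in>UNIV. r$i * e$i)" by simp
    also have "\<dots> = (\<Sum>i\<in>UNIV. \<Sum>j<4. c j * (r$i * w j $ i))"
      by (simp add: c sum_component sum_distrib_left mult_ac)
    also have "\<dots> = (\<Sum>j<4. c j * (\<Sum>i\<in>UNIV. r$i * w j $ i))"
      by (subst sum.swap) (simp add: sum_distrib_left)
    also have "\<dots> = 0" using o by simp
    finally show ?thesis .
  qed
  then show ?thesis by (simp add: vec_eq_iff)
qed

lemma smult_sum: "c *s (\<Sum>i\<in>S. f i) = (\<Sum>i\<in>S. c *s (f i :: 'a::comm_ring_1^'n))"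
  by (simp add: vec_eq_iff sum_distrib_left)

context
  fixes q h :: nat
  assumes q_def: "q = 2^h" and oddh: "odd h"
    and char2: "(2::'a::{field,finite}) = 0"
    and frob4: "\<And>x::'a. x ^ (q^4) = x"
begin

lemma q_pos: "0 < q" using q_def by simp
lemma hpos: "0 < h" using oddh by (cases h) auto

lemma add_self: "(x::'a) + x = 0"
  using char2 by (metis mult_2 mult_zero_left)

lemma minus_char2: "-(x::'a) = x"
  using add_self by (metis add_eq_0_iff)

lemma diff_char2: "(x::'a) - y = x + y"
  using minus_char2 by (metis diff_conv_add_uminus)

lemma sq_add: "((x::'a) + y)^2 = x^2 + y^2"
proof -
  have "(x+y)^2 = x^2 + y^2 + (x*y + x*y)" by (simp add: power2_eq_square algebra_simps)
  then show ?thesis by (simp add: add_self)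
qed

lemma pow2k_add: "((x::'a) + y)^(2^k) = x^(2^k) + y^(2^k)"
proof (induct k)
  case (Suc k)
  have "(x+y)^(2^Suc k) = ((x+y)^(2^k))^2" by (simp add: power_mult[symmetric] mult.commute)
  also have "\<dots> = (x^(2^k))^2 + (y^(2^k))^2" using Suc by (simp add: sq_add)
  also have "\<dots> = x^(2^Suc k) + y^(2^Suc k)" by (simp add: power_mult[symmetric] mult.commute)
  finally show ?case .
qed simp

lemma frob_add: "((x::'a) + y)^q = x^q + y^q"
  unfolding q_def by (rule pow2k_add)

lemma frob_diff: "((x::'a) - y)^q = x^q - y^q"
  by (simp add: diff_char2 frob_add)

lemma frob_sum: "(\<Sum>i\<in>S. (f i :: 'a))^q = (\<Sum>i\<in>S. f i ^ q)"
proof (cases "finite S")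
  case True then show ?thesis by (induct S rule: finite_induct) (auto simp: frob_add q_pos)
qed (simp add: q_pos)

lemma Fq_iff: "x \<in> subfield_Fq q \<longleftrightarrow> (x::'a)^q = x"
  by (simp add: subfield_Fq_def)

lemma Fq_diff: "a \<in> subfield_Fq q \<Longrightarrow> b \<in> subfield_Fq q \<Longrightarrow> (a::'a) - b \<in> subfield_Fq q"
  by (simp add: Fq_iff frob_diff)

lemma frob_mult: "((x::'a) * y)^q = x^q * y^q" by (simp add: power_mult_distrib)
lemma frob_one: "(1::'a)^q = 1" by simp
lemma frob_zero: "(0::'a)^q = 0" using q_pos by simp
lemma frob_eq0: "(x::'a)^q = 0 \<longleftrightarrow> x = 0" using q_pos by simp
lemma frob_inj: "(x::'a)^q = y^q \<longleftrightarrow> x = y"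
proof
  assume "x^q = y^q"
  then have "(x - y)^q = 0" by (simp add: frob_diff)
  then show "x = y" by (simp add: frob_eq0)
qed simp

lemma pow4j: "(b::'a)^4 = b + 1 \<Longrightarrow> b^(4^j) = (if even j then b else b + 1)"
proof (induct j)
  case (Suc j)
  have "b^(4^Suc j) = (b^(4^j))^4" by (simp add: power_mult[symmetric] mult.commute)
  also have "\<dots> = (if even (Suc j) then b else b + 1)"
  proof (cases "even j")
    case True then show ?thesis using Suc by simp
  next
    case False
    have "(b+1)^4 = ((b+1)^2)^2" by (simp add: power_mult[symmetric])
    also have "\<dots> = b^4 + 1" by (simp add: sq_add power_mult[symmetric])
    finally show ?thesis using Suc False by (simp add: add.assoc add_self)
  qed
  finally show ?case .
qed simp

lemma nob: assumes "(b::'a)^4 + b + 1 = 0" "b^q = b + 1" shows False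
proof -
  have b4: "b^4 = b + 1" using assms(1) by (metis add.assoc add_self add.commute add_0 add.left_cancel)
  obtain j where hj: "h = 2*j + 1" using oddh oddE by blast
  have "q = (4^j)*2" using q_def hj by (simp add: power_add power_mult)
  then have "b^q = (b^(4^j))^2" by (simp add: power_mult)
  then have bq: "b^q = (if even j then b^2 else (b+1)^2)" using pow4j[OF b4, of j] by simp
  show False
  proof (cases "even j")
    case True
    then have b2: "b^2 = b + 1" using bq assms(2) by simp
    have "b^4 = (b^2)^2" by (simp add: power_mult[symmetric])
    also have "\<dots> = b^2 + 1" using b2 by (simp add: sq_add)
    also have "\<dots> = b" using b2 by (simp add: add.assoc add_self)
    finally have "b + 1 = b" using b4 by simp
    then show False by simp
  next
    case False
    then have "b^2 + 1 = b + 1" using bq assms(2) by (simp add: sq_add)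
    then have b2: "b^2 = b" by simp
    have "b^4 = (b^2)^2" by (simp add: power_mult[symmetric])
    also have "\<dots> = b" by (simp only: b2)
    finally have "b + 1 = b" using b4 by simp
    then show False by simp
  qed
qed

lemma nocube: assumes "(s::'a)^2 + s + 1 = 0" "s^q = s" shows False
proof -
  have s2: "s^2 = s + 1" using assms(1) by (metis add.assoc add_self add.commute add_0 add.left_cancel)
  have s4: "s^4 = s"
  proof -
    have "s^4 = (s^2)^2" by (simp add: power_mult[symmetric])
    also have "\<dots> = s^2 + 1" using s2 by (simp add: sq_add)
    also have "\<dots> = s" using s2 by (simp add: add.assoc add_self)
    finally show ?thesis .
  qed
  have s4j: "s^(4^j) = s" for j
    by (induct j) (simp_all add: power_mult[symmetric] mult.commute, metis power_mult s4)
  obtain j where hj: "h = 2*j + 1" using oddh oddE by blast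
  have "q = (4^j)*2" using q_def hj by (simp add: power_add power_mult)
  then have "s^q = s^2" using s4j[of j] by (simp add: power_mult)
  then have "s + 1 = s" using s2 assms(2) by simp
  then show False by simp
qed

lemma sum0: "(x::'a) + y = 0 \<Longrightarrow> x = y"
  by (metis add_self add.left_cancel)
lemma sum0': "(x::'a) + y = 0 \<Longrightarrow> y = x"
  using sum0 by metis

lemma K0_false:
  fixes a b c d a1 b1 c1 d1 a2 b2 c2 d2 a3 b3 c3 d3 :: 'a
  assumes ca: "a^q = a1" "a1^q = a2" "a2^q = a3" "a3^q = a"
    and cb: "b^q = b1" "b1^q = b2" "b2^q = b3" "b3^q = b"
    and cc: "c^q = c1" "c1^q = c2" "c2^q = c3" "c3^q = c"
    and cd: "d^q = d1" "d1^q = d2" "d2^q = d3" "d3^q = d"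
    and X11: "1 + b + c1 = 0" and X12: "a + b + d1 = 0"
    and Y: "a*a3 + b*c3 + 1 = 0" "a*b3 + b*d3 + 1 = 0" "c*a3 + d*c3 + 1 = 0" "c*b3 + d*d3 = 0"
    and Z: "1 + a2*a1 + b2*c1 = 0" "1 + a2*b1 + b2*d1 = 0" "1 + c2*a1 + d2*c1 = 0" "c2*b1 + d2*d1 = 0"
  shows False
proof -
  note fr = frob_add frob_mult frob_one frob_zero ca cb cc cd
  have sY: "a1*a + b1*c + 1 = 0" "a1*b + b1*d + 1 = 0" "c1*a + d1*c + 1 = 0" "c1*b + d1*d = 0"
    using arg_cong[OF Y(1), of "\<lambda>t. t^q"] arg_cong[OF Y(2), of "\<lambda>t. t^q"]
      arg_cong[OF Y(3), of "\<lambda>t. t^q"] arg_cong[OF Y(4), of "\<lambda>t. t^q"]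
    by (simp_all only: fr)
  have sY': "a1*a + b1*c = 1" "a1*b + b1*d = 1" "c1*a + d1*c = 1" "c1*b + d1*d = 0"
    using sY by (simp_all add: sum0)
  have Z': "a2*a1 + b2*c1 = 1" "a2*b1 + b2*d1 = 1" "c2*a1 + d2*c1 = 1" "c2*b1 + d2*d1 = 0"
    using sum0'[of 1 "a2*a1 + b2*c1"] sum0'[of 1 "a2*b1+b2*d1"] sum0'[of 1 "c2*a1+d2*c1"] Z
    by (simp_all add: add.assoc)
  have S2_1: "a2 + b2 = a + c"
  proof -
    have "a2 + b2 = a2 * (a1*a + b1*c) + b2*(c1*a + d1*c)" using sY' by simp
    also have "\<dots> = (a2*a1 + b2*c1)*a + (a2*b1+b2*d1)*c" by (simp add: algebra_simps)
    finally show ?thesis using Z' by simp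
  qed
  have S2_2: "a2 = b + d"
  proof -
    have "a2 = a2 * (a1*b + b1*d) + b2*(c1*b + d1*d)" using sY' by simp
    also have "\<dots> = (a2*a1 + b2*c1)*b + (a2*b1+b2*d1)*d" by (simp add: algebra_simps)
    finally show ?thesis using Z' by simp
  qed
  have S2_3: "c2 + d2 = a"
  proof -
    have "c2 + d2 = c2 * (a1*a + b1*c) + d2*(c1*a + d1*c)" using sY' by simp
    also have "\<dots> = (c2*a1 + d2*c1)*a + (c2*b1+d2*d1)*c" by (simp add: algebra_simps)
    finally show ?thesis using Z' by simp
  qed
  have S2_4: "c2 = b"
  proof -
    have "c2 = c2 * (a1*b + b1*d) + d2*(c1*b + d1*d)" using sY' by simp
    also have "\<dots> = (c2*a1 + d2*c1)*b + (c2*b1+d2*d1)*d" by (simp add: algebra_simps)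
    finally show ?thesis using Z' by simp
  qed
  have S2': "a + b = a2 + c2" "c + d = a2" "c = b2"
    using arg_cong[OF S2_1, of "\<lambda>t. (t^q)^q"] 
      arg_cong[OF S2_3, of "\<lambda>t. (t^q)^q"] arg_cong[OF S2_4, of "\<lambda>t. (t^q)^q"]
    by (simp_all only: fr)
  have cb0: "c = b" using S2_2 S2'(2) by simp
  have "c + d + c = a + c" using S2_1 S2'(2) S2'(3) by simp
  then have "b + d = a" using cb0 by (simp add: add_self add.assoc add.left_commute)
  then have "d = a - b" by (simp add: algebra_simps)
  then have "d = a + b" by (simp add: diff_char2)
  note db0 = this
  have "c1 = b1" using cb0 ca cb cc by metis
  have "d1 = a1 + b1" using arg_cong[OF db0, of "\<lambda>t. t^q"] by (simp only: fr)
  have b1e: "b1 = b + 1" using X11 \<open>c1 = b1\<close> by (metis sum0 add.commute)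
  have "a1 + b1 = a + b" using X12 \<open>d1 = a1 + b1\<close> by (metis sum0)
  then have a1e: "a1 = a + 1" using b1e by (metis add.assoc add.commute add_self add_0 add.left_cancel)
  have one2: "(1::'a) + 1 = 0" by (rule add_self)
  have "(a+1)*b + (b+1)*(a+b) = (a*b + a*b) + (b + b) + b^2 + a"
    by (simp add: algebra_simps power2_eq_square)
  then have "b^2 + a = 1" using sY'(2) a1e b1e db0 by (simp add: add_self)
  then have ae: "a = b^2 + 1" by (metis add.assoc add.commute add_self add_0)
  have "(a+1)*a + (b+1)*b = a^2 + a + b^2 + b" by (simp add: algebra_simps power2_eq_square)
  also have "a^2 = (b^2)^2 + 1" using ae by (simp add: sq_add)
  also have "(b^2)^2 = b^4" by (simp add: power_mult[symmetric])
  finally have "b^4 + 1 + (b^2 + 1) + b^2 + b = 1" using sY'(1) a1e b1e cb0 ae by simp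
  moreover have "b^4 + 1 + (b^2 + 1) + b^2 + b = b^4 + b + (1 + 1) + (b^2 + b^2)" by (simp add: algebra_simps)
  ultimately have "b^4 + b + (1 + 1) + (b^2 + b^2) = 1" by metis
  then have "b^4 + b = 1" by (simp only: add_self add_0_right)
  then have "b^4 + b + 1 = 0" by (simp only: add_self)
  moreover have "b^q = b + 1" using cb b1e by simp
  ultimately show False by (rule nob)
qed

lemma solve_char2: "(x::'a) + y = z \<Longrightarrow> x = z + y"
  by (metis add_diff_cancel_right' diff_char2)

lemma frob4': "((((t::'a)^q)^q)^q)^q = t"
  using frob4[of t] by (simp add: power_mult[symmetric] power4_eq_xxxx mult.assoc)

lemma solved:
  fixes x0 x1 x2 x3 y0 y1 y2 y3 a1 b1 c1 d1 a3 b3 c3 d3 :: 'a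
  assumes e11: "x2 + y3 = a1*x1 + b1*y1" and e13: "x0 + y1 = a3*x3 + b3*y3"
    and e21: "x3 + y2 + y3 = c1*x1 + d1*y1" and e23: "x1 + y0 + y1 = c3*x3 + d3*y3"
  shows "x0 = a3*x3 + b3*y3 + y1" "y0 = c3*x3 + d3*y3 + x1 + y1"
    "x2 = a1*x1 + b1*y1 + y3" "y2 = c1*x1 + d1*y1 + x3 + y3"
proof -
  show "x0 = a3*x3 + b3*y3 + y1" using solve_char2[OF e13] .
  have "y0 + (x1 + y1) = c3*x3 + d3*y3" using e23 by (simp add: ac_simps)
  from solve_char2[OF this] show "y0 = c3*x3 + d3*y3 + x1 + y1" by (simp add: ac_simps)
  show "x2 = a1*x1 + b1*y1 + y3" using solve_char2[OF e11] .
  have "y2 + (x3 + y3) = c1*x1 + d1*y1" using e21 by (simp add: ac_simps)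
  from solve_char2[OF this] show "y2 = c1*x1 + d1*y1 + x3 + y3" by (simp add: ac_simps)
qed

lemma rowsK:
  fixes x0 x1 x2 x3 y0 y1 y2 y3 a b c d a1 b1 c1 d1 a2 b2 c2 d2 a3 b3 c3 d3 :: 'a
  assumes e10: "x1 + y2 = a*x0 + b*y0" and e11: "x2 + y3 = a1*x1 + b1*y1"
    and e12: "x3 + y0 = a2*x2 + b2*y2" and e13: "x0 + y1 = a3*x3 + b3*y3"
    and e20: "x2 + y1 + y2 = c*x0 + d*y0" and e21: "x3 + y2 + y3 = c1*x1 + d1*y1"
    and e22: "x0 + y3 + y0 = c2*x2 + d2*y2" and e23: "x1 + y0 + y1 = c3*x3 + d3*y3"
  shows "(1 + b + c1)*x1 + (a + b + d1)*y1 + (a*a3 + b*c3 + 1)*x3 + (a*b3 + b*d3 + 1)*y3 = 0"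
    and "(d + a1 + c1)*x1 + (1 + c + d + b1 + d1)*y1 + (c*a3 + d*c3 + 1)*x3 + (c*b3 + d*d3)*y3 = 0"
    and "(1 + a2*a1 + b2*c1)*x1 + (1 + a2*b1 + b2*d1)*y1 + (1 + c3 + b2)*x3 + (d3 + a2 + b2)*y3 = 0"
    and "(1 + c2*a1 + d2*c1)*x1 + (c2*b1 + d2*d1)*y1 + (a3 + c3 + d2)*x3 + (1 + b3 + d3 + c2 + d2)*y3 = 0"
proof -
  note sv = solved[OF e11 e13 e21 e23]
  note sx0 = sv(1) and sy0 = sv(2) and sx2 = sv(3) and sy2 = sv(4)
  have z: "\<And>u v. (u::'a) = v \<Longrightarrow> u + v = 0" by (simp add: add_self)
  show "(1 + b + c1)*x1 + (a + b + d1)*y1 + (a*a3 + b*c3 + 1)*x3 + (a*b3 + b*d3 + 1)*y3 = 0"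
  proof -
    have "(1 + b + c1)*x1 + (a + b + d1)*y1 + (a*a3 + b*c3 + 1)*x3 + (a*b3 + b*d3 + 1)*y3
       = (x1 + y2) + (a*x0 + b*y0)" unfolding sx0 sy0 sy2 by (simp add: algebra_simps char2)
    then show ?thesis using z[OF e10] by simp
  qed
  show "(d + a1 + c1)*x1 + (1 + c + d + b1 + d1)*y1 + (c*a3 + d*c3 + 1)*x3 + (c*b3 + d*d3)*y3 = 0"
  proof -
    have "(d + a1 + c1)*x1 + (1 + c + d + b1 + d1)*y1 + (c*a3 + d*c3 + 1)*x3 + (c*b3 + d*d3)*y3
       = (x2 + y1 + y2) + (c*x0 + d*y0)" unfolding sx0 sy0 sx2 sy2 by (simp add: algebra_simps char2)
    then show ?thesis using z[OF e20] by simp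
  qed
  show "(1 + a2*a1 + b2*c1)*x1 + (1 + a2*b1 + b2*d1)*y1 + (1 + c3 + b2)*x3 + (d3 + a2 + b2)*y3 = 0"
  proof -
    have "(1 + a2*a1 + b2*c1)*x1 + (1 + a2*b1 + b2*d1)*y1 + (1 + c3 + b2)*x3 + (d3 + a2 + b2)*y3
       = (x3 + y0) + (a2*x2 + b2*y2)" unfolding sx0 sy0 sx2 sy2 by (simp add: algebra_simps char2)
    then show ?thesis using z[OF e12] by simp
  qed
  show "(1 + c2*a1 + d2*c1)*x1 + (c2*b1 + d2*d1)*y1 + (a3 + c3 + d2)*x3 + (1 + b3 + d3 + c2 + d2)*y3 = 0"
  proof -
    have "(1 + c2*a1 + d2*c1)*x1 + (c2*b1 + d2*d1)*y1 + (a3 + c3 + d2)*x3 + (1 + b3 + d3 + c2 + d2)*y3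
       = (x0 + y3 + y0) + (c2*x2 + d2*y2)" unfolding sx0 sy0 sx2 sy2 by (simp add: algebra_simps char2)
    then show ?thesis using z[OF e22] by simp
  qed
qed

lemma moore:
  fixes w :: "nat \<Rightarrow> 'a^'n"
  assumes cl: "\<And>l. (\<Sum>j<n. l j *s w j) = 0 \<Longrightarrow> (\<Sum>j<n. (l j)^q *s w j) = 0"
    and li: "lin_indep_over (subfield_Fq q) n w"
  shows "lin_indep_over UNIV n w"
proof (rule ccontr)
  assume "\<not> lin_indep_over UNIV n w"
  then obtain l0 where "(\<Sum>j<n. l0 j *s w j) = 0" "\<exists>j<n. l0 j \<noteq> 0"
    unfolding lin_indep_over_def by blast
  define R where "R = (\<lambda>l. (\<Sum>j<n. l j *s w j) = 0 \<and> (\<exists>j<n. l j \<noteq> (0::'a)))"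
  define sp where "sp = (\<lambda>l. card {j. j < n \<and> l j \<noteq> (0::'a)})"
  have "R l0" using \<open>(\<Sum>j<n. l0 j *s w j) = 0\<close> \<open>\<exists>j<n. l0 j \<noteq> 0\<close> by (simp add: R_def)
  then obtain l where Rl: "R l" and lmin: "\<And>l'. R l' \<Longrightarrow> sp l \<le> sp l'"
    using ex_has_least_nat[of R l0 sp] by blast
  from Rl obtain k where k: "k < n" "l k \<noteq> 0" and sl: "(\<Sum>j<n. l j *s w j) = 0" by (auto simp: R_def)
  define m where "m = (\<lambda>j. l j / l k)"
  have sm: "(\<Sum>j<n. m j *s w j) = 0"
  proof -
    have "(\<Sum>j<n. m j *s w j) = (1 / l k) *s (\<Sum>j<n. l j *s w j)"
      by (simp add: smult_sum m_def vector_smult_assoc)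
    then show ?thesis using sl by simp
  qed
  have mk: "m k = 1" using k by (simp add: m_def)
  define v where "v = (\<lambda>j. m j ^ q - m j)"
  have sv: "(\<Sum>j<n. v j *s w j) = 0"
    using cl[OF sm] sm by (simp add: v_def vector_sub_rdistrib sum_subtractf)
  have sub: "{j. j < n \<and> v j \<noteq> 0} \<subseteq> {j. j < n \<and> l j \<noteq> 0} - {k}"
    using mk q_pos by (auto simp: v_def m_def)
  have "sp v < sp l"
  proof -
    have "sp v \<le> card ({j. j < n \<and> l j \<noteq> 0} - {k})"
      unfolding sp_def by (rule card_mono[OF _ sub]) simp
    also have "\<dots> < sp l" unfolding sp_def
      by (rule psubset_card_mono) (use k in auto)
    finally show ?thesis .
  qed
  then have "\<not> R v" using lmin by force
  then have "\<forall>j<n. v j = 0" using sv by (auto simp: R_def)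
  then have "\<forall>j<n. m j \<in> subfield_Fq q" by (simp add: v_def Fq_iff)
  then have "\<forall>j<n. m j = 0" using li_apply[OF li _ sm] by blast
  then show False using mk k by simp
qed

lemma coreA:
  fixes a b c d :: 'a and x y :: "nat \<Rightarrow> 'a"
  assumes E1: "\<And>j. j < 4 \<Longrightarrow> x j^q + (y j^q)^q = a * x j + b * y j"
    and E2: "\<And>j. j < 4 \<Longrightarrow> (x j^q)^q + y j^q + (y j^q)^q = c * x j + d * y j"
    and li: "\<And>cc. \<forall>j<4. cc j \<in> subfield_Fq q \<Longrightarrow> (\<Sum>j<4. cc j * x j) = 0 \<Longrightarrow>
               (\<Sum>j<4. cc j * y j) = 0 \<Longrightarrow> \<forall>j<4. cc j = 0"
  shows False
proof -
  define a1 where "a1 = a^q"  define a2 where "a2 = a1^q"  define a3 where "a3 = a2^q"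
  define b1 where "b1 = b^q"  define b2 where "b2 = b1^q"  define b3 where "b3 = b2^q"
  define c1 where "c1 = c^q"  define c2 where "c2 = c1^q"  define c3 where "c3 = c2^q"
  define d1 where "d1 = d^q"  define d2 where "d2 = d1^q"  define d3 where "d3 = d2^q"
  define x1 where "x1 = (\<lambda>j. x j^q)"  define x2 where "x2 = (\<lambda>j. x1 j^q)"  define x3 where "x3 = (\<lambda>j. x2 j^q)"
  define y1 where "y1 = (\<lambda>j. y j^q)"  define y2 where "y2 = (\<lambda>j. y1 j^q)"  define y3 where "y3 = (\<lambda>j. y2 j^q)"
  have a4: "a3^q = a" "b3^q = b" "c3^q = c" "d3^q = d"
    by (simp_all add: a1_def a2_def a3_def b1_def b2_def b3_def c1_def c2_def c3_def d1_def d2_def d3_def frob4')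
  have x4: "x3 j^q = x j" "y3 j^q = y j" for j
    by (simp_all add: x1_def x2_def x3_def y1_def y2_def y3_def frob4')
  note fr = frob_add frob_mult
  have eqs: "x1 j + y2 j = a*x j + b*y j \<and> x2 j + y3 j = a1*x1 j + b1*y1 j \<and>
     x3 j + y j = a2*x2 j + b2*y2 j \<and> x j + y1 j = a3*x3 j + b3*y3 j \<and>
     x2 j + y1 j + y2 j = c*x j + d*y j \<and> x3 j + y2 j + y3 j = c1*x1 j + d1*y1 j \<and>
     x j + y3 j + y j = c2*x2 j + d2*y2 j \<and> x1 j + y j + y1 j = c3*x3 j + d3*y3 j" if j: "j < 4" for j
  proof -
    have e10: "x1 j + y2 j = a*x j + b*y j" using E1[OF j] by (simp add: x1_def y2_def y1_def)
    have e11: "x2 j + y3 j = a1*x1 j + b1*y1 j"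
      using arg_cong[OF e10, of "\<lambda>t. t^q"] by (simp only: fr x2_def y3_def a1_def b1_def x1_def y1_def y2_def)
    have e12: "x3 j + y j = a2*x2 j + b2*y2 j"
      using arg_cong[OF e11, of "\<lambda>t. t^q"] x4(2)[of j] by (simp only: fr x3_def a2_def b2_def x2_def y2_def)
    have e13: "x j + y1 j = a3*x3 j + b3*y3 j"
      using arg_cong[OF e12, of "\<lambda>t. t^q"] x4(1)[of j] by (simp only: fr a3_def b3_def x3_def y3_def y1_def)
    have e20: "x2 j + y1 j + y2 j = c*x j + d*y j" using E2[OF j] by (simp add: x1_def x2_def y2_def y1_def)
    have e21: "x3 j + y2 j + y3 j = c1*x1 j + d1*y1 j"
      using arg_cong[OF e20, of "\<lambda>t. t^q"] by (simp only: fr x3_def y3_def c1_def d1_def x1_def y1_def y2_def x2_def)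
    have e22: "x j + y3 j + y j = c2*x2 j + d2*y2 j"
      using arg_cong[OF e21, of "\<lambda>t. t^q"] x4[of j] by (simp only: fr c2_def d2_def x2_def y2_def y3_def x3_def)
    have e23: "x1 j + y j + y1 j = c3*x3 j + d3*y3 j"
      using arg_cong[OF e22, of "\<lambda>t. t^q"] x4[of j] by (simp only: fr c3_def d3_def x3_def y3_def x1_def y1_def)
    show ?thesis using e10 e11 e12 e13 e20 e21 e22 e23 by blast
  qed
  have sx: "x j = a3*x3 j + b3*y3 j + y1 j" "y j = c3*x3 j + d3*y3 j + x1 j + y1 j"
      "x2 j = a1*x1 j + b1*y1 j + y3 j" "y2 j = c1*x1 j + d1*y1 j + x3 j + y3 j" if "j < 4" for j
    using solved[of "x2 j" "y3 j" a1 "x1 j" b1 "y1 j" "x j" a3 "x3 j" b3 "y2 j" c1 d1 "y j" c3 d3]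
      eqs[OF that] by blast+
  define u where "u = (\<lambda>j. vec4 (x1 j) (y1 j) (x3 j) (y3 j))"
  have comp: "(\<Sum>j<4. l j *s u j) $ 0 = (\<Sum>j<4. l j * x1 j)"
    "(\<Sum>j<4. l j *s u j) $ 1 = (\<Sum>j<4. l j * y1 j)"
    "(\<Sum>j<4. l j *s u j) $ 2 = (\<Sum>j<4. l j * x3 j)"
    "(\<Sum>j<4. l j *s u j) $ 3 = (\<Sum>j<4. l j * y3 j)" for l
    by (simp_all add: u_def sum_component)
  have sfrob: "(\<Sum>j<(4::nat). l j * (z j::'a))^q = (\<Sum>j<4. l j ^ q * z j ^ q)" for l z
    by (simp add: frob_sum frob_mult)
  have liq: "lin_indep_over (subfield_Fq q) 4 u"
    unfolding lin_indep_over_def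
  proof (rule allI, rule impI, rule impI)
    fix cc assume cc: "\<forall>i<4. cc i \<in> subfield_Fq q" and s0: "(\<Sum>i<4. cc i *s u i) = 0"
    have ccq: "cc i ^ q = cc i" if "i < 4" for i using cc that by (simp add: Fq_iff)
    have "(\<Sum>i<4. cc i * x i)^q = (\<Sum>i<4. cc i * x1 i)"
      unfolding sfrob by (rule sum.cong) (simp_all add: ccq x1_def)
    also have "\<dots> = 0" using arg_cong[OF s0, of "\<lambda>v. v$0"] comp by simp
    finally have X: "(\<Sum>i<4. cc i * x i) = 0" by (simp add: frob_eq0)
    have "(\<Sum>i<4. cc i * y i)^q = (\<Sum>i<4. cc i * y1 i)"
      unfolding sfrob by (rule sum.cong) (simp_all add: ccq y1_def)
    also have "\<dots> = 0" using arg_cong[OF s0, of "\<lambda>v. v$1"] comp by simp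
    finally have Y: "(\<Sum>i<4. cc i * y i) = 0" by (simp add: frob_eq0)
    show "\<forall>i<4. cc i = 0" using li[OF cc X Y] .
  qed
  have cl: "(\<Sum>j<4. l j ^ q *s u j) = 0" if s0: "(\<Sum>j<4. l j *s u j) = 0" for l
  proof -
    have S1: "(\<Sum>j<4. l j * x1 j) = 0" and T1: "(\<Sum>j<4. l j * y1 j) = 0"
      and S3: "(\<Sum>j<4. l j * x3 j) = 0" and T3: "(\<Sum>j<4. l j * y3 j) = 0"
      using arg_cong[OF s0, of "\<lambda>v. v$0"] arg_cong[OF s0, of "\<lambda>v. v$1"]
        arg_cong[OF s0, of "\<lambda>v. v$2"] arg_cong[OF s0, of "\<lambda>v. v$3"] comp by simp_all
    have "(\<Sum>j<4. l j * x j) = (\<Sum>j<4. l j * (a3*x3 j + b3*y3 j + y1 j))"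
      by (rule sum.cong) (simp_all add: sx)
    also have "\<dots> = a3 * (\<Sum>j<4. l j * x3 j) + b3 * (\<Sum>j<4. l j * y3 j) + (\<Sum>j<4. l j * y1 j)"
      by (simp add: sum.distrib sum_distrib_left algebra_simps)
    finally have S0: "(\<Sum>j<4. l j * x j) = 0" using S3 T3 T1 by simp
    have "(\<Sum>j<4. l j * y j) = (\<Sum>j<4. l j * (c3*x3 j + d3*y3 j + x1 j + y1 j))"
      by (rule sum.cong) (simp_all add: sx)
    also have "\<dots> = c3 * (\<Sum>j<4. l j * x3 j) + d3 * (\<Sum>j<4. l j * y3 j) + (\<Sum>j<4. l j * x1 j) + (\<Sum>j<4. l j * y1 j)"
      by (simp add: sum.distrib sum_distrib_left algebra_simps)
    finally have T0: "(\<Sum>j<4. l j * y j) = 0" using S3 T3 S1 T1 by simp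
    have "(\<Sum>j<4. l j * x2 j) = (\<Sum>j<4. l j * (a1*x1 j + b1*y1 j + y3 j))"
      by (rule sum.cong) (simp_all add: sx)
    also have "\<dots> = a1 * (\<Sum>j<4. l j * x1 j) + b1 * (\<Sum>j<4. l j * y1 j) + (\<Sum>j<4. l j * y3 j)"
      by (simp add: sum.distrib sum_distrib_left algebra_simps)
    finally have S2: "(\<Sum>j<4. l j * x2 j) = 0" using S1 T1 T3 by simp
    have "(\<Sum>j<4. l j * y2 j) = (\<Sum>j<4. l j * (c1*x1 j + d1*y1 j + x3 j + y3 j))"
      by (rule sum.cong) (simp_all add: sx)
    also have "\<dots> = c1 * (\<Sum>j<4. l j * x1 j) + d1 * (\<Sum>j<4. l j * y1 j) + (\<Sum>j<4. l j * x3 j) + (\<Sum>j<4. l j * y3 j)"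
      by (simp add: sum.distrib sum_distrib_left algebra_simps)
    finally have T2: "(\<Sum>j<4. l j * y2 j) = 0" using S1 T1 S3 T3 by simp
    have "(\<Sum>j<4. l j ^ q * x1 j) = 0" using arg_cong[OF S0, of "\<lambda>t. t^q"] by (simp add: sfrob x1_def q_pos)
    moreover have "(\<Sum>j<4. l j ^ q * y1 j) = 0" using arg_cong[OF T0, of "\<lambda>t. t^q"] by (simp add: sfrob y1_def q_pos)
    moreover have "(\<Sum>j<4. l j ^ q * x3 j) = 0" using arg_cong[OF S2, of "\<lambda>t. t^q"] by (simp add: sfrob x3_def q_pos)
    moreover have "(\<Sum>j<4. l j ^ q * y3 j) = 0" using arg_cong[OF T2, of "\<lambda>t. t^q"] by (simp add: sfrob y3_def q_pos)
    ultimately show ?thesis unfolding vec_eq4 comp by simp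
  qed
  have liF: "lin_indep_over UNIV 4 u" by (rule moore[OF cl liq])
  have rows: "(1 + b + c1)*x1 j + (a + b + d1)*y1 j + (a*a3 + b*c3 + 1)*x3 j + (a*b3 + b*d3 + 1)*y3 j = 0 \<and>
    (d + a1 + c1)*x1 j + (1 + c + d + b1 + d1)*y1 j + (c*a3 + d*c3 + 1)*x3 j + (c*b3 + d*d3)*y3 j = 0 \<and>
    (1 + a2*a1 + b2*c1)*x1 j + (1 + a2*b1 + b2*d1)*y1 j + (1 + c3 + b2)*x3 j + (d3 + a2 + b2)*y3 j = 0 \<and>
    (1 + c2*a1 + d2*c1)*x1 j + (c2*b1 + d2*d1)*y1 j + (a3 + c3 + d2)*x3 j + (1 + b3 + d3 + c2 + d2)*y3 j = 0"
    if "j < 4" for j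
    using rowsK[of "x1 j" "y2 j" a "x j" b "y j" "x2 j" "y3 j" a1 b1 "y1 j" "x3 j" a2 b2 a3 b3 c d c1 d1 c2 d2 c3 d3]
      eqs[OF that] by blast
  have o: "\<And>A B C D. (\<And>j. j < 4 \<Longrightarrow> A * x1 j + B * y1 j + C * x3 j + D * y3 j = 0) \<Longrightarrow>
      A = 0 \<and> B = 0 \<and> C = 0 \<and> D = 0"
  proof -
    fix A B C D assume h: "\<And>j. j < 4 \<Longrightarrow> A * x1 j + B * y1 j + C * x3 j + D * y3 j = 0"
    have "vec4 A B C D = 0"
      by (rule orth4[OF liF]) (simp add: sum4 u_def h)
    then show "A = 0 \<and> B = 0 \<and> C = 0 \<and> D = 0" by (simp add: vec_eq4)
  qed
  have r1: "1 + b + c1 = 0 \<and> a + b + d1 = 0 \<and> a*a3 + b*c3 + 1 = 0 \<and> a*b3 + b*d3 + 1 = 0"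
    by (rule o) (use rows in blast)
  have r2: "d + a1 + c1 = 0 \<and> 1 + c + d + b1 + d1 = 0 \<and> c*a3 + d*c3 + 1 = 0 \<and> c*b3 + d*d3 = 0"
    by (rule o) (use rows in blast)
  have r3: "1 + a2*a1 + b2*c1 = 0 \<and> 1 + a2*b1 + b2*d1 = 0 \<and> 1 + c3 + b2 = 0 \<and> d3 + a2 + b2 = 0"
    by (rule o) (use rows in blast)
  have r4: "1 + c2*a1 + d2*c1 = 0 \<and> c2*b1 + d2*d1 = 0 \<and> a3 + c3 + d2 = 0 \<and> 1 + b3 + d3 + c2 + d2 = 0"
    by (rule o) (use rows in blast)
  show False
    using K0_false[OF a1_def[symmetric] a2_def[symmetric] a3_def[symmetric] a4(1)
        b1_def[symmetric] b2_def[symmetric] b3_def[symmetric] a4(2)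
        c1_def[symmetric] c2_def[symmetric] c3_def[symmetric] a4(3)
        d1_def[symmetric] d2_def[symmetric] d3_def[symmetric] a4(4)] r1 r2 r3 r4
    by blast
qed

lemma caseB_alg:
  fixes p0 p1 w2 w3 :: 'a
  assumes p: "p0 \<noteq> 0 \<or> p1 \<noteq> 0" and w: "w2 \<noteq> 0 \<or> w3 \<noteq> 0"
    and g1: "w3 * p0^q + w2 * p1^q = 0"
    and g2: "w3 * (p1^q)^q + w2 * ((p0^q)^q + (p1^q)^q) = 0"
  shows False
proof -
  have w2: "w2 \<noteq> 0"
  proof
    assume "w2 = 0"
    then have "w3 \<noteq> 0" using w by simp
    then have "p0^q = 0" "(p1^q)^q = 0" using g1 g2 \<open>w2 = 0\<close> by simp_all
    then show False using p by (simp add: frob_eq0)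
  qed
  have p0: "p0 \<noteq> 0"
  proof
    assume "p0 = 0"
    then have "w2 * p1^q = 0" using g1 by (simp add: frob_zero)
    then show False using w2 p \<open>p0 = 0\<close> by (simp add: frob_eq0)
  qed
  define P0 where "P0 = p0^q"
  define P1 where "P1 = p1^q"
  have P0: "P0 \<noteq> 0" "P0^q \<noteq> 0" using p0 by (simp_all add: P0_def frob_eq0)
  define s where "s = P1 / P0"
  define s1 where "s1 = s^q"
  have "w3 * P0 = w2 * P1" using g1 sum0 P0_def P1_def by blast
  then have ws: "w3 = w2 * s" using P0 by (simp add: s_def field_simps)
  have "w3 * P1^q = w2 * (P0^q + P1^q)" using g2 sum0 P0_def P1_def by blast
  then have "s * P1^q = P0^q + P1^q" using w2 ws by (simp add: mult.assoc)
  then have "s * (P1^q / P0^q) = 1 + P1^q / P0^q" using P0 by (simp add: field_simps)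
  then have "s * s1 = 1 + s1" by (simp add: s1_def s_def power_divide)
  then have E0: "s1 * (s + 1) = 1"
    by (metis (no_types, lifting) add.commute add_self distrib_left mult.commute mult_1_right add.left_cancel add_0 add.assoc)
  define s2 where "s2 = s1^q"
  define s3 where "s3 = s2^q"
  have s4: "s3^q = s" by (simp add: s3_def s2_def s1_def frob4')
  have E1: "s2 * (s1 + 1) = 1" using arg_cong[OF E0, of "\<lambda>t. t^q"] by (simp add: frob_mult frob_add s2_def s1_def)
  have E2: "s3 * (s2 + 1) = 1" using arg_cong[OF E1, of "\<lambda>t. t^q"] by (simp add: frob_mult frob_add s3_def s2_def)
  have E3: "s * (s3 + 1) = 1" using arg_cong[OF E2, of "\<lambda>t. t^q"] s4 by (simp add: frob_mult frob_add s3_def)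
  have tr: "u + 1 = u * v" if "u * (v + 1) = 1" for u v :: 'a
  proof -
    from that have "u * v + u = 1" by (simp add: distrib_left)
    then have "u * v = 1 + u" using solve_char2 by blast
    then show "u + 1 = u * v" by (simp add: add.commute)
  qed
  have nz: "s1 \<noteq> 0" "s2 \<noteq> 0" "s3 \<noteq> 0" "s + 1 \<noteq> 0" using E0 E1 E2 by auto
  have "s2 * (s1 * s) = 1" using E1 tr[OF E0] by simp
  then have "s2 * s = s + 1" using E0 nz by (metis mult.assoc mult.commute mult_cancel_left)
  have "s3 * (s2 * s1) = 1" using E2 tr[OF E1] by simp
  also have "\<dots> = s2 * (s1 * s)" using \<open>s2 * (s1 * s) = 1\<close> by simp
  finally have "s3 = s" using nz by (metis mult.assoc mult.commute mult_cancel_left)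
  then have "s * (s + 1) = 1" using E3 by simp
  then have s1s: "s1 = s" using E0 nz by (metis mult.commute mult_cancel_left)
  have "s^2 + s + 1 = 0"
  proof -
    have "s^2 + s = 1" using \<open>s * (s + 1) = 1\<close> by (simp add: power2_eq_square distrib_left)
    then show ?thesis by (simp add: add_self)
  qed
  moreover have "s^q = s" using s1s s1_def by simp
  ultimately show False by (rule nocube)
qed

lemma coreB:
  fixes g0 g1 g2 :: 'a and lam :: "nat \<Rightarrow> 'a"
  assumes E: "\<And>j. j < 4 \<Longrightarrow> g0 * lam j + g1 * lam j^q + g2 * (lam j^q)^q = 0"
    and li: "\<And>cc. \<forall>j<4. cc j \<in> subfield_Fq q \<Longrightarrow> (\<Sum>j<4. cc j * lam j) = 0 \<Longrightarrow> \<forall>j<4. cc j = 0"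
  shows "g0 = 0 \<and> g1 = 0 \<and> g2 = 0"
proof -
  define l1 where "l1 = (\<lambda>j. lam j^q)"  define l2 where "l2 = (\<lambda>j. l1 j^q)"  define l3 where "l3 = (\<lambda>j. l2 j^q)"
  have l4: "l3 j^q = lam j" for j by (simp add: l1_def l2_def l3_def frob4')
  define u where "u = (\<lambda>j. vec4 (lam j) (l1 j) (l2 j) (l3 j))"
  have comp: "(\<Sum>j<4. l j *s u j) $ 0 = (\<Sum>j<4. l j * lam j)"
    "(\<Sum>j<4. l j *s u j) $ 1 = (\<Sum>j<4. l j * l1 j)"
    "(\<Sum>j<4. l j *s u j) $ 2 = (\<Sum>j<4. l j * l2 j)"
    "(\<Sum>j<4. l j *s u j) $ 3 = (\<Sum>j<4. l j * l3 j)" for l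
    by (simp_all add: u_def sum_component)
  have sfrob: "(\<Sum>j<(4::nat). l j * (z j::'a))^q = (\<Sum>j<4. l j ^ q * z j ^ q)" for l z
    by (simp add: frob_sum frob_mult)
  have liq: "lin_indep_over (subfield_Fq q) 4 u"
    unfolding lin_indep_over_def
  proof (rule allI, rule impI, rule impI)
    fix cc assume cc: "\<forall>i<4. cc i \<in> subfield_Fq q" and s0: "(\<Sum>i<4. cc i *s u i) = 0"
    have "(\<Sum>i<4. cc i * lam i) = 0" using arg_cong[OF s0, of "\<lambda>v. v$0"] comp by simp
    then show "\<forall>i<4. cc i = 0" using li[OF cc] by blast
  qed
  have cl: "(\<Sum>j<4. l j ^ q *s u j) = 0" if s0: "(\<Sum>j<4. l j *s u j) = 0" for l
  proof -
    have S: "(\<Sum>j<4. l j * lam j) = 0" "(\<Sum>j<4. l j * l1 j) = 0"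
      "(\<Sum>j<4. l j * l2 j) = 0" "(\<Sum>j<4. l j * l3 j) = 0"
      using arg_cong[OF s0, of "\<lambda>v. v$0"] arg_cong[OF s0, of "\<lambda>v. v$1"]
        arg_cong[OF s0, of "\<lambda>v. v$2"] arg_cong[OF s0, of "\<lambda>v. v$3"] comp by simp_all
    have "(\<Sum>j<4. l j ^ q * lam j) = 0" using arg_cong[OF S(4), of "\<lambda>t. t^q"] by (simp add: sfrob l4 q_pos)
    moreover have "(\<Sum>j<4. l j ^ q * l1 j) = 0" using arg_cong[OF S(1), of "\<lambda>t. t^q"] by (simp add: sfrob l1_def q_pos)
    moreover have "(\<Sum>j<4. l j ^ q * l2 j) = 0" using arg_cong[OF S(2), of "\<lambda>t. t^q"] by (simp add: sfrob l2_def q_pos)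
    moreover have "(\<Sum>j<4. l j ^ q * l3 j) = 0" using arg_cong[OF S(3), of "\<lambda>t. t^q"] by (simp add: sfrob l3_def q_pos)
    ultimately show ?thesis unfolding vec_eq4 comp by simp
  qed
  have liF: "lin_indep_over UNIV 4 u" by (rule moore[OF cl liq])
  have "vec4 g0 g1 g2 0 = 0"
    by (rule orth4[OF liF]) (simp add: sum4 u_def E l1_def l2_def)
  then show ?thesis by (simp add: vec_eq4)
qed

lemma U_comb:
  fixes w :: "nat \<Rightarrow> 'a^4"
  assumes U: "\<forall>j<4. w j $ 2 = (w j $ 0)^q + ((w j $ 1)^q)^q \<and> w j $ 3 = ((w j $ 0)^q)^q + (w j $ 1)^q + ((w j $ 1)^q)^q"
    and cc: "\<forall>j<4. cc j \<in> subfield_Fq q"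
    and X: "(\<Sum>j<4. cc j * w j $ 0) = 0" and Y: "(\<Sum>j<4. cc j * w j $ 1) = 0"
  shows "(\<Sum>j<4. cc j *s w j) = 0"
proof -
  have ccq: "cc j ^ q = cc j" if "j < 4" for j using cc that by (simp add: Fq_iff)
  have sf: "(\<Sum>j<(4::nat). l j * (z j::'a))^q = (\<Sum>j<4. l j ^ q * z j ^ q)" for l z
    by (simp add: frob_sum frob_mult)
  have X1: "(\<Sum>j<4. cc j * (w j $ 0)^q) = 0"
  proof -
    have "(\<Sum>j<4. cc j * (w j $ 0)^q) = (\<Sum>j<4. cc j * w j $ 0)^q"
      unfolding sf by (rule sum.cong) (simp_all add: ccq)
    then show ?thesis using X q_pos by simp
  qed
  have X2: "(\<Sum>j<4. cc j * ((w j $ 0)^q)^q) = 0"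
  proof -
    have "(\<Sum>j<4. cc j * ((w j $ 0)^q)^q) = ((\<Sum>j<4. cc j * w j $ 0)^q)^q"
      unfolding sf by (rule sum.cong) (simp_all add: ccq)
    then show ?thesis using X q_pos by simp
  qed
  have Y1: "(\<Sum>j<4. cc j * (w j $ 1)^q) = 0"
  proof -
    have "(\<Sum>j<4. cc j * (w j $ 1)^q) = (\<Sum>j<4. cc j * w j $ 1)^q"
      unfolding sf by (rule sum.cong) (simp_all add: ccq)
    then show ?thesis using Y q_pos by simp
  qed
  have Y2: "(\<Sum>j<4. cc j * ((w j $ 1)^q)^q) = 0"
  proof -
    have "(\<Sum>j<4. cc j * ((w j $ 1)^q)^q) = ((\<Sum>j<4. cc j * w j $ 1)^q)^q"
      unfolding sf by (rule sum.cong) (simp_all add: ccq)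
    then show ?thesis using Y q_pos by simp
  qed
  have c2: "(\<Sum>j<4. cc j * w j $ 2) = (\<Sum>j<4. cc j * (w j $ 0)^q) + (\<Sum>j<4. cc j * ((w j $ 1)^q)^q)"
  proof -
    have "(\<Sum>j<4. cc j * w j $ 2) = (\<Sum>j<4. cc j * (w j $ 0)^q + cc j * ((w j $ 1)^q)^q)"
      by (rule sum.cong) (use U in \<open>simp_all add: distrib_left\<close>)
    then show ?thesis by (simp add: sum.distrib)
  qed
  have c3: "(\<Sum>j<4. cc j * w j $ 3) = (\<Sum>j<4. cc j * ((w j $ 0)^q)^q) + (\<Sum>j<4. cc j * (w j $ 1)^q) + (\<Sum>j<4. cc j * ((w j $ 1)^q)^q)"
  proof -
    have "(\<Sum>j<4. cc j * w j $ 3) = (\<Sum>j<4. cc j * ((w j $ 0)^q)^q + cc j * (w j $ 1)^q + cc j * ((w j $ 1)^q)^q)"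
      by (rule sum.cong) (use U in \<open>simp_all add: distrib_left\<close>)
    then show ?thesis by (simp add: sum.distrib)
  qed
  show ?thesis unfolding vec_eq4 using X Y c2 c3 X1 X2 Y1 Y2 by (simp add: sum_component)
qed

lemma caseB_main:
  fixes h0 h1 :: "'a^4" and w :: "nat \<Rightarrow> 'a^4" and al be :: "nat \<Rightarrow> 'a"
  assumes ind: "\<And>x y. x *s h0 + y *s h1 = 0 \<Longrightarrow> x = 0 \<and> y = 0"
    and det0: "h0$0 * h1$1 = h0$1 * h1$0" and p: "h0$0 \<noteq> 0 \<or> h0$1 \<noteq> 0"
    and U: "\<forall>j<4. w j $ 2 = (w j $ 0)^q + ((w j $ 1)^q)^q \<and> w j $ 3 = ((w j $ 0)^q)^q + (w j $ 1)^q + ((w j $ 1)^q)^q"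
    and ab: "\<forall>j<4. w j = al j *s h0 + be j *s h1"
    and liXY: "\<And>cc. \<forall>j<4. cc j \<in> subfield_Fq q \<Longrightarrow> (\<Sum>j<4. cc j * w j $ 0) = 0 \<Longrightarrow>
               (\<Sum>j<4. cc j * w j $ 1) = 0 \<Longrightarrow> \<forall>j<4. cc j = 0"
  shows False
proof -
  obtain ka rh where ka: "ka \<noteq> 0" and kr: "ka * h1$0 = rh * h0$0" "ka * h1$1 = rh * h0$1"
  proof (cases "h0$0 = 0")
    case True
    then have "h0$1 \<noteq> 0" using p by simp
    show ?thesis by (rule that[of "h0$1" "h1$1"]) (use True det0 \<open>h0$1 \<noteq> 0\<close> in \<open>simp_all add: mult.commute\<close>)
  next
    case False
    show ?thesis by (rule that[of "h0$0" "h1$0"]) (use False det0 in \<open>simp_all add: mult.commute\<close>)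
  qed
  define wv where "wv = ka *s h1 - rh *s h0"
  have wv01: "wv$0 = 0" "wv$1 = 0" using kr by (simp_all add: wv_def mult.commute)
  have "wv \<noteq> 0"
  proof
    assume "wv = 0"
    then have "(- rh) *s h0 + ka *s h1 = 0" by (simp add: wv_def vector_smult_lneg)
    then show False using ind ka by blast
  qed
  then have wv23: "wv$2 \<noteq> 0 \<or> wv$3 \<noteq> 0" using wv01 by (simp add: vec_eq4)
  define lam where "lam = (\<lambda>j. al j + be j * rh / ka)"
  define mu where "mu = (\<lambda>j. be j / ka)"
  have wl: "w j = lam j *s h0 + mu j *s wv" if "j < 4" for j
    using ab that ka unfolding vec_eq4 by (simp add: lam_def mu_def wv_def field_simps)
  have X: "w j $ 0 = lam j * h0$0" and Y: "w j $ 1 = lam j * h0$1" if "j < 4" for j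
    using wl[OF that] wv01 by simp_all
  define g0 where "g0 = wv$3 * h0$2 + wv$2 * h0$3"
  define g1 where "g1 = wv$3 * (h0$0)^q + wv$2 * (h0$1)^q"
  define g2 where "g2 = wv$3 * ((h0$1)^q)^q + wv$2 * (((h0$0)^q)^q + ((h0$1)^q)^q)"
  have E: "g0 * lam j + g1 * lam j^q + g2 * (lam j^q)^q = 0" if j: "j < 4" for j
  proof -
    have W2: "w j $ 2 = lam j * h0$2 + mu j * wv$2" and W3: "w j $ 3 = lam j * h0$3 + mu j * wv$3"
      using wl[OF j] by simp_all
    have i: "wv$3 * w j $ 2 + wv$2 * w j $ 3 = g0 * lam j + (mu j * wv$2 * wv$3 + mu j * wv$2 * wv$3)"
      unfolding W2 W3 g0_def by (simp add: algebra_simps)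
    then have i': "wv$3 * w j $ 2 + wv$2 * w j $ 3 = g0 * lam j" by (simp add: add_self)
    have ii: "wv$3 * w j $ 2 + wv$2 * w j $ 3 = g1 * lam j^q + g2 * (lam j^q)^q"
      using U j X[OF j] Y[OF j] unfolding g1_def g2_def by (simp add: power_mult_distrib algebra_simps)
    have "g0 * lam j + g1 * lam j^q + g2 * (lam j^q)^q = g0 * lam j + (g1 * lam j^q + g2 * (lam j^q)^q)"
      by (simp add: add.assoc)
    also have "\<dots> = 0" using i' ii by (simp add: add_self)
    finally show ?thesis .
  qed
  have li: "\<forall>j<4. cc j = 0" if cc: "\<forall>j<4. cc j \<in> subfield_Fq q" and s: "(\<Sum>j<4. cc j * lam j) = 0" for cc
  proof -
    have "(\<Sum>j<4. cc j * w j $ 0) = (\<Sum>j<4. cc j * lam j) * h0$0"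
      by (simp add: sum_distrib_right X mult.assoc)
    moreover have "(\<Sum>j<4. cc j * w j $ 1) = (\<Sum>j<4. cc j * lam j) * h0$1"
      by (simp add: sum_distrib_right Y mult.assoc)
    ultimately have "(\<Sum>j<4. cc j * w j $ 0) = 0" "(\<Sum>j<4. cc j * w j $ 1) = 0" using s by simp_all
    then show ?thesis by (rule liXY[OF cc])
  qed
  have gg: "g0 = 0 \<and> g1 = 0 \<and> g2 = 0" by (rule coreB[OF E li]) auto
  have G1: "wv$3 * (h0$0)^q + wv$2 * (h0$1)^q = 0" using gg by (simp add: g1_def)
  have G2: "wv$3 * ((h0$1)^q)^q + wv$2 * (((h0$0)^q)^q + ((h0$1)^q)^q) = 0" using gg by (simp add: g2_def)
  show False by (rule caseB_alg[OF p wv23 G1 G2])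
qed

lemma main4:
  fixes h0 h1 :: "'a^4" and w :: "nat \<Rightarrow> 'a^4"
  assumes ind: "\<And>x y. x *s h0 + y *s h1 = 0 \<Longrightarrow> x = 0 \<and> y = 0"
    and U: "\<forall>j<4. w j $ 2 = (w j $ 0)^q + ((w j $ 1)^q)^q \<and> w j $ 3 = ((w j $ 0)^q)^q + (w j $ 1)^q + ((w j $ 1)^q)^q"
    and H: "\<forall>j<4. \<exists>x y. w j = x *s h0 + y *s h1"
    and li: "lin_indep_over (subfield_Fq q) 4 w"
  shows False
proof -
  have liXY: "\<forall>j<4. cc j = 0" if cc: "\<forall>j<4. cc j \<in> subfield_Fq q"
    and X: "(\<Sum>j<4. cc j * w j $ 0) = 0" and Y: "(\<Sum>j<4. cc j * w j $ 1) = 0" for cc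
    using li_apply[OF li cc U_comb[OF U cc X Y]] by blast
  have "\<forall>j. \<exists>xy. j < 4 \<longrightarrow> w j = fst xy *s h0 + snd xy *s h1" using H by auto
  then obtain f where f: "\<forall>j. j < 4 \<longrightarrow> w j = fst (f j) *s h0 + snd (f j) *s h1" by (metis choice)
  define al where "al = (\<lambda>j. fst (f j))"
  define be where "be = (\<lambda>j. snd (f j))"
  have ab: "\<forall>j<4. w j = al j *s h0 + be j *s h1" using f by (simp add: al_def be_def)
  define det where "det = h0$0 * h1$1 - h0$1 * h1$0"
  show False
  proof (cases "det = 0")
    case False
    define a where "a = (h1$1 * h0$2 - h0$1 * h1$2) / det"
    define b where "b = (h0$0 * h1$2 - h1$0 * h0$2) / det"
    define c where "c = (h1$1 * h0$3 - h0$1 * h1$3) / det"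
    define d where "d = (h0$0 * h1$3 - h1$0 * h0$3) / det"
    have comp: "w j $ 0 = al j * h0$0 + be j * h1$0" "w j $ 1 = al j * h0$1 + be j * h1$1"
      "w j $ 2 = al j * h0$2 + be j * h1$2" "w j $ 3 = al j * h0$3 + be j * h1$3" if "j < 4" for j
      using ab that by simp_all
    have lin2: "al j * h0$2 + be j * h1$2 = a * w j $ 0 + b * w j $ 1" if "j < 4" for j
    proof -
      have num: "(h1$1 * h0$2 - h0$1 * h1$2) * (al j * h0$0 + be j * h1$0) + (h0$0 * h1$2 - h1$0 * h0$2) * (al j * h0$1 + be j * h1$1)
          = det * (al j * h0$2 + be j * h1$2)" by (simp add: det_def algebra_simps)
      have "a * w j $ 0 + b * w j $ 1 = ((h1$1 * h0$2 - h0$1 * h1$2) * (al j * h0$0 + be j * h1$0) + (h0$0 * h1$2 - h1$0 * h0$2) * (al j * h0$1 + be j * h1$1)) / det"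
        unfolding comp[OF that] a_def b_def by (simp add: add_divide_distrib)
      also have "\<dots> = al j * h0$2 + be j * h1$2" unfolding num using False by simp
      finally show ?thesis by simp
    qed
    have lin3: "al j * h0$3 + be j * h1$3 = c * w j $ 0 + d * w j $ 1" if "j < 4" for j
    proof -
      have num: "(h1$1 * h0$3 - h0$1 * h1$3) * (al j * h0$0 + be j * h1$0) + (h0$0 * h1$3 - h1$0 * h0$3) * (al j * h0$1 + be j * h1$1)
          = det * (al j * h0$3 + be j * h1$3)" by (simp add: det_def algebra_simps)
      have "c * w j $ 0 + d * w j $ 1 = ((h1$1 * h0$3 - h0$1 * h1$3) * (al j * h0$0 + be j * h1$0) + (h0$0 * h1$3 - h1$0 * h0$3) * (al j * h0$1 + be j * h1$1)) / det"
        unfolding comp[OF that] c_def d_def by (simp add: add_divide_distrib)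
      also have "\<dots> = al j * h0$3 + be j * h1$3" unfolding num using False by simp
      finally show ?thesis by simp
    qed
    show False
    proof (rule coreA[of "\<lambda>j. w j $ 0" "\<lambda>j. w j $ 1" a b c d])
      fix j :: nat assume j: "j < 4"
      show "(w j $ 0)^q + ((w j $ 1)^q)^q = a * w j $ 0 + b * w j $ 1"
        using U j comp(3)[OF j] lin2[OF j] by simp
      show "((w j $ 0)^q)^q + (w j $ 1)^q + ((w j $ 1)^q)^q = c * w j $ 0 + d * w j $ 1"
        using U j comp(4)[OF j] lin3[OF j] by simp
    next
      fix cc assume "\<forall>j<4. cc j \<in> subfield_Fq q" "(\<Sum>j<4. cc j * w j $ 0) = 0" "(\<Sum>j<4. cc j * w j $ 1) = 0"
      then show "\<forall>j<4. cc j = 0" by (rule liXY)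
    qed
  next
    case True
    then have det0: "h0$0 * h1$1 = h0$1 * h1$0" by (simp add: det_def)
    show False
    proof (cases "h0$0 \<noteq> 0 \<or> h0$1 \<noteq> 0")
      case True
      show False by (rule caseB_main[OF ind det0 True U ab liXY])
    next
      case p0: False
      show False
      proof (cases "h1$0 \<noteq> 0 \<or> h1$1 \<noteq> 0")
        case True
        have ind': "x = 0 \<and> y = 0" if "x *s h1 + y *s h0 = 0" for x y
          using ind[of y x] that by (simp add: add.commute)
        have ab': "\<forall>j<4. w j = be j *s h1 + al j *s h0" using ab by (simp add: add.commute)
        have det0': "h1$0 * h0$1 = h1$1 * h0$0" using det0 by (simp add: mult.commute)
        show False by (rule caseB_main[OF ind' det0' True U ab' liXY])
      next
        case False
        have "w j $ 0 = 0 \<and> w j $ 1 = 0" if "j < 4" for j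
          using ab that p0 False by simp
        then have "\<forall>j<4. (\<lambda>j::nat. if j = 0 then (1::'a) else 0) j = 0"
          by (intro liXY) (auto simp: Fq_iff q_pos)
        then show False by (metis one_neq_zero zero_less_numeral)
      qed
    qed
  qed
qed

end


lemma power_card_same:
  fixes x :: "'a::{field,finite}"
  shows "x ^ card (UNIV :: 'a set) = x"
proof (cases "x = 0")
  case False
  have "x * (\<Prod>y\<in>UNIV-{0}. x * y) = x * x ^ (card (UNIV :: 'a set) - 1) * \<Prod>(UNIV-{0})"
    by (simp add: prod.distrib mult_ac)
  also have "x * x ^ (card (UNIV :: 'a set) - 1) = x ^ Suc (card (UNIV :: 'a set) - 1)"
    by (subst power_Suc) auto
  also have "Suc (card (UNIV :: 'a set) - 1) = card (UNIV :: 'a set)"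
    using finite_UNIV_card_ge_0[where ?'a = 'a] by simp
  also have "(\<Prod>y\<in>UNIV-{0}. x * y) = (\<Prod>y\<in>UNIV-{0}. y)"
    by (rule prod.reindex_bij_witness[of _ "\<lambda>y. y / x" "\<lambda>y. x * y"]) (use False in auto)
  finally show ?thesis
    by simp
qed (use finite_UNIV_card_ge_0[where ?'a = 'a] in auto)

lemma char2_of_card:
  assumes "CARD('a::{field,finite}) = 2 ^ k" "0 < k"
  shows "(2::'a) = 0"
proof -
  have pos: "CHAR('a) > 0" by (rule finite_imp_CHAR_pos) simp
  have pr: "prime CHAR('a)" by (rule prime_CHAR_semidom[OF pos])
  have "CHAR('a) dvd 2 ^ k" using CHAR_dvd_CARD[where 'a='a] assms(1) by simp
  then have "CHAR('a) dvd 2" using pr prime_dvd_power by blast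
  then have "CHAR('a) = 1 \<or> CHAR('a) = 2" using two_is_prime_nat[unfolded prime_nat_iff] by blast
  then have "CHAR('a) = 2" using pr by auto
  then have "(of_nat 2 :: 'a) = 0" by (metis of_nat_CHAR)
  then show ?thesis by simp
qed

lemma li_mono:
  assumes li: "lin_indep_over K n v" and z: "0 \<in> K" and mn: "m \<le> n"
  shows "lin_indep_over K m v"
  unfolding lin_indep_over_def
proof (rule allI, rule impI, rule impI)
  fix c assume c: "\<forall>i<m. c i \<in> K" and s: "(\<Sum>i<m. c i *s v i) = 0"
  define c' where "c' = (\<lambda>i. if i < m then c i else 0)"
  have "(\<Sum>i<n. c' i *s v i) = (\<Sum>i<m. c' i *s v i)"
    by (rule sum.mono_neutral_right) (use mn in \<open>auto simp: c'_def\<close>)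
  also have "\<dots> = (\<Sum>i<m. c i *s v i)" by (rule sum.cong) (auto simp: c'_def)
  finally have s': "(\<Sum>i<n. c' i *s v i) = 0" using s by simp
  have "\<forall>i<n. c' i \<in> K" using c z by (auto simp: c'_def)
  then have "\<forall>i<n. c' i = 0" using li_apply[OF li _ s'] by blast
  then show "\<forall>i<m. c i = 0"
  proof (intro allI impI)
    fix i assume "\<forall>i<n. c' i = 0" "i < m"
    then have "c' i = 0" using mn by simp
    then show "c i = 0" using \<open>i < m\<close> by (simp add: c'_def)
  qed
qed

theorem theorem4p5:
  fixes h q :: nat
  assumes "odd h" and "q = 2 ^ h"
    and "CARD('a::{field,finite}) = q ^ 4"
  defines "U \<equiv> {vec4 x y (x ^ q + y ^ (q^2)) (x ^ (q^2) + y ^ q + y ^ (q^2)) | x y :: 'a. True}"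
  shows "\<forall>H :: ('a ^ 4) set. subspace_over UNIV H \<and> dim_over UNIV H = 2
           \<longrightarrow> dim_over (subfield_Fq q) (U \<inter> H) \<le> 3"
proof (intro allI impI)
  fix H :: "('a^4) set"
  assume HH: "subspace_over UNIV H \<and> dim_over UNIV H = 2"
  have hpos: "0 < h" using assms(1) by (cases h) auto
  have card: "CARD('a) = 2 ^ (h * 4)" using assms(2,3) by (simp add: power_mult)
  have char2: "(2::'a) = 0" by (rule char2_of_card[OF card]) (use hpos in simp)
  have frob4: "x ^ (q^4) = x" for x :: 'a using power_card_same[of x] assms(3) by simp
  note M4 = main4[OF assms(2) assms(1) char2 frob4]
  define P where "P = (\<lambda>n. \<exists>v. (\<forall>i<n. v i \<in> H) \<and> lin_indep_over (UNIV::'a set) n v)"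
  have Pb: "n \<le> 4" if "P n" for n using that indep_le4 unfolding P_def by blast
  have P0: "P 0" unfolding P_def lin_indep_over_def by simp
  have dimH: "Greatest P = 2" using HH by (simp add: dim_over_def P_def)
  have "P (Greatest P)" by (rule GreatestI_nat[of P 0 4]) (use P0 Pb in auto)
  then have "P 2" using dimH by simp
  then obtain v where vH: "\<forall>i<2. v i \<in> H" and vli: "lin_indep_over (UNIV::'a set) 2 v"
    unfolding P_def by blast
  have notP3: "\<not> P 3"
  proof
    assume "P 3"
    then have "3 \<le> Greatest P" by (rule Greatest_le_nat) (use Pb in blast)
    then show False using dimH by simp
  qed
  have ind: "x = 0 \<and> y = 0" if "x *s v 0 + y *s v 1 = 0" for x y
  proof -
    define c where "c = (\<lambda>i::nat. if i = 0 then x else y)"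
    have "(\<Sum>i<2. c i *s v i) = x *s v 0 + y *s v 1" by (simp add: c_def numeral_2_eq_2)
    then have s: "(\<Sum>i<2. c i *s v i) = 0" using that by simp
    have "c 0 = 0" by (rule li_apply[OF vli _ s]) auto
    moreover have "c 1 = 0" by (rule li_apply[OF vli _ s]) auto
    ultimately show ?thesis by (simp add: c_def)
  qed
  have span: "\<exists>x y. u = x *s v 0 + y *s v 1" if uH: "u \<in> H" for u
  proof -
    define vv where "vv = (\<lambda>i::nat. if i = 0 then v 0 else if i = 1 then v 1 else u)"
    have "\<forall>i<3. vv i \<in> H" using vH uH by (auto simp: vv_def less_Suc_eq numeral_3_eq_3)
    then have "\<not> lin_indep_over (UNIV::'a set) 3 vv" using notP3 unfolding P_def by blast
    then obtain c where cs: "(\<Sum>i<3. c i *s vv i) = 0" and cnz: "\<exists>i<3. c i \<noteq> 0"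
      unfolding lin_indep_over_def by blast
    have s3: "(\<Sum>i<3. c i *s vv i) = c 0 *s v 0 + c 1 *s v 1 + c 2 *s u"
      by (simp add: vv_def numeral_3_eq_3 numeral_2_eq_2 lessThan_Suc)
    have c2: "c 2 \<noteq> 0"
    proof
      assume "c 2 = 0"
      then have "c 0 *s v 0 + c 1 *s v 1 = 0" using cs s3 by simp
      then have "c 0 = 0 \<and> c 1 = 0" by (rule ind)
      then show False using cnz \<open>c 2 = 0\<close> by (auto simp: numeral_3_eq_3 numeral_2_eq_2 less_Suc_eq)
    qed
    have "u = (- c 0 / c 2) *s v 0 + (- c 1 / c 2) *s v 1"
    proof -
      have e: "c 0 *s v 0 + c 1 *s v 1 + c 2 *s u = 0" using cs s3 by simp
      show ?thesis
      proof (subst vec_eq_iff, rule allI)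
        fix i
        have "c 0 * v 0 $ i + c 1 * v 1 $ i + c 2 * u $ i = 0" using arg_cong[OF e, of "\<lambda>z. z $ i"] by simp
        then show "u $ i = ((- c 0 / c 2) *s v 0 + (- c 1 / c 2) *s v 1) $ i"
          using c2 by (simp add: field_simps) (metis add.commute add_eq_0_iff2 add.left_commute)
      qed
    qed
    then show ?thesis by blast
  qed
  define Q where "Q = (\<lambda>n. \<exists>w. (\<forall>i<n. w i \<in> U \<inter> H) \<and> lin_indep_over (subfield_Fq q :: 'a set) n w)"
  have Qb: "n \<le> 3" if "Q n" for n
  proof (rule ccontr)
    assume "\<not> n \<le> 3"
    then have n4: "4 \<le> n" by simp
    from that obtain w where wUH: "\<forall>i<n. w i \<in> U \<inter> H" and wli: "lin_indep_over (subfield_Fq q :: 'a set) n w"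
      unfolding Q_def by blast
    have li4: "lin_indep_over (subfield_Fq q :: 'a set) 4 w"
      by (rule li_mono[OF wli _ n4]) (use assms(2) in \<open>simp add: subfield_Fq_def\<close>)
    have Uw: "\<forall>j<4. w j $ 2 = (w j $ 0)^q + ((w j $ 1)^q)^q \<and> w j $ 3 = ((w j $ 0)^q)^q + (w j $ 1)^q + ((w j $ 1)^q)^q"
    proof (intro allI impI)
      fix j :: nat assume "j < 4"
      then have "w j \<in> U" using wUH n4 by auto
      then obtain x y where "w j = vec4 x y (x ^ q + y ^ (q^2)) (x ^ (q^2) + y ^ q + y ^ (q^2))"
        unfolding U_def by blast
      then show "w j $ 2 = (w j $ 0)^q + ((w j $ 1)^q)^q \<and> w j $ 3 = ((w j $ 0)^q)^q + (w j $ 1)^q + ((w j $ 1)^q)^q"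
        by (simp add: power_mult[symmetric] power2_eq_square)
    qed
    have Hw: "\<forall>j<4. \<exists>x y. w j = x *s v 0 + y *s v 1"
      using wUH n4 span by auto
    show False by (rule M4[OF ind Uw Hw li4])
  qed
  have Q0: "Q 0" unfolding Q_def lin_indep_over_def by simp
  have "Q (Greatest Q)" by (rule GreatestI_nat[of Q 0 3]) (use Q0 Qb in auto)
  then have "Greatest Q \<le> 3" by (rule Qb)
  then show "dim_over (subfield_Fq q) (U \<inter> H) \<le> 3" by (simp add: dim_over_def Q_def)
qed

end
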